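(* Let $A$ be a $*$-algebra with $*$-differential calculus $(\Omega,{\rm d},\wedge)$, let $\mathcal{S}$ be an $A$-bimodule, and let $\epsilon,\epsilon'\in\{1,-1\}$. Let $\mathcal{J}:\mathcal{S}\to\mathcal{S}$ be an antilinear map such that $\mathcal{J}(a.\phi)=\mathcal{J}(\phi).a^*$ and $\mathcal{J}(\phi.a)=a^*.\mathcal{J}(\phi)$ for all $a\in A,\phi\in\mathcal S$ (equivalently $j:\mathcal S\to\overline{\mathcal S}$, $j(\phi)=\overline{\mathcal J\phi}$, is a bimodule map) and $\mathcal{J}^2=\epsilon\,\mathrm{id}$. Let $(\nabla_{\mathcal{S}},\sigma_{\mathcal{S}})$ be a left bimodule connection on $\mathcal{S}$ with $\sigma_{\mathcal{S}}$ invertible, such that $(\mathrm{id}\otimes j)\nabla_{\mathcal{S}}=\nabla_{\overline{\mathcal{S}}}\circ j$, where $\nabla_{\overline{\mathcal S}}$ is the canonical left connection on $\overline{\mathcal S}$. Let $\triangleright:\Omega^1\otimes_A\mathcal{S}\to\mathcal{S}$ be an $A$-bimodule map such that $$\mathcal{J}(\xi\triangleright\phi)=\epsilon'\,\triangleright\big(\sigma_{\mathcal{S}}(\mathcal{J}\phi\otimes\xi^* )\big)\quad\text{for all }\xi\in\Omega^1,\ \phi\in\mathcal{S}$$ (in bimodule language $j\circ\triangleright=\epsilon'\,\overline{\triangleright\circ\sigma_{\mathcal S}}\,\Upsilon^{-1}(\star\otimes j)$). Put $D=\triangleright\circ\nabla_{\mathcal{S}}:\mathcal{S}\to\mathcal{S}$.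 Then: (a) $\mathcal J^2=\epsilon$; $a.(\mathcal{J}b\mathcal{J}^{-1}\phi)=\mathcal{J}b\mathcal{J}^{-1}(a.\phi)$ for all $a,b\in A$; $\mathcal{J}D=\epsilon' D\mathcal{J}$; and $[[D,a],\mathcal{J}b\mathcal{J}^{-1}]=0$ for all $a,b\in A$ (the algebraic conditions of an odd real spectral triple). (b) If moreover there is an $A$-bimodule map $\gamma:\mathcal{S}\to\mathcal{S}$ with $\gamma^2=\mathrm{id}$, $\nabla_{\mathcal{S}}\gamma=(\mathrm{id}\otimes\gamma)\nabla_{\mathcal{S}}$, $\gamma\circ\triangleright=-\triangleright\circ(\mathrm{id}\otimes\gamma)$ and $\mathcal{J}\gamma=\epsilon''\gamma\mathcal{J}$ for a sign $\epsilon''$, then in addition $\gamma$ commutes with the left action of $A$, $\mathcal J\gamma=\epsilon''\gamma\mathcal J$ and $D\gamma=-\gamma D$ (the algebraic conditions of an even real spectral triple).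
   Context: Elements of $A$ act on $\mathcal S$ by left multiplication and are identified with these operators; $[D,a]$ is the commutator. Left bimodule connection: a linear $\nabla_{\mathcal S}:\mathcal S\to\Omega^1\otimes_A\mathcal S$ with $\nabla_{\mathcal S}(a.\phi)={\rm d}a\otimes\phi+a.\nabla_{\mathcal S}\phi$, together with a bimodule map $\sigma_{\mathcal S}:\mathcal S\otimes_A\Omega^1\to\Omega^1\otimes_A\mathcal S$ with $\sigma_{\mathcal S}(\phi\otimes{\rm d}a)=\nabla_{\mathcal S}(\phi.a)-\nabla_{\mathcal S}(\phi).a$. Conjugate bimodule: for an $A$-bimodule $E$, $\overline E$ is the set $\{\overline e: e\in E\}$ with $\overline e+\overline f=\overline{e+f}$, $\lambda\overline e=\overline{\lambda^* e}$ ($\lambda\in\mathbb C$), $a.\overline e=\overline{e.a^*}$, $\overline e.a=\overline{a^*.e}$. For a bimodule map $\theta$, $\overline\theta(\overline e)=\overline{\theta(e)}$. $\Upsilon:\overline{E\otimes_AF}\to\overline F\otimes_A\overline E$, $\Upsilon(\overline{e\otimes f})=\overline f\otimes\overline e$. $\star:\Omega\to\overline\Omega$, $\star\xi=\overline{\xi^*}$. The canonical left connection on $\overline{\mathcal S}$ is $\nabla_{\overline{\mathcal S}}(\overline\phi)=(\star^{-1}\otimes\mathrm{id})\Upsilon\,\overline{\sigma_{\mathcal S}^{-1}\nabla_{\mathcal S}\phi}$. *)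

theory Defs
  imports Complex_Main "HOL-Library.Poly_Mapping"
begin

definition star_algebra :: "(complex \<Rightarrow> 'a::ring_1) \<Rightarrow> ('a \<Rightarrow> 'a) \<Rightarrow> bool" where
  "star_algebra emb st \<longleftrightarrow>
     (\<forall>c e. emb (c + e) = emb c + emb e) \<and> (\<forall>c e. emb (c * e) = emb c * emb e) \<and> emb 1 = 1 \<and>
     (\<forall>c x. emb c * x = x * emb c) \<and>
     (\<forall>x y. st (x + y) = st x + st y) \<and> (\<forall>x y. st (x * y) = st y * st x) \<and>
     (\<forall>c x. st (emb c * x) = emb (cnj c) * st x) \<and> (\<forall>x. st (st x) = x)"

text \<open>A-bimodule (unital, complex scalars acting centrally through emb, so M is a
  complex vector space via  c.m = (emb c).m = m.(emb c)).\<close>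
definition bimodule :: "(complex \<Rightarrow> 'a::ring_1) \<Rightarrow> ('a \<Rightarrow> 'm::ab_group_add \<Rightarrow> 'm) \<Rightarrow> ('m \<Rightarrow> 'a \<Rightarrow> 'm) \<Rightarrow> bool" where
  "bimodule emb l r \<longleftrightarrow>
     (\<forall>a m n. l a (m + n) = l a m + l a n) \<and> (\<forall>a b m. l (a + b) m = l a m + l b m) \<and>
     (\<forall>a b m. l (a * b) m = l a (l b m)) \<and> (\<forall>m. l 1 m = m) \<and>
     (\<forall>a m n. r (m + n) a = r m a + r n a) \<and> (\<forall>a b m. r m (a + b) = r m a + r m b) \<and>
     (\<forall>a b m. r m (a * b) = r (r m a) b) \<and> (\<forall>m. r m 1 = m) \<and>
     (\<forall>a b m. l a (r m b) = r (l a m) b) \<and> (\<forall>c m. l (emb c) m = r m (emb c))"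

text \<open>Bimodule map (additive and commuting with both actions; complex-linearity follows).\<close>
definition bimod_map :: "('a \<Rightarrow> 'm \<Rightarrow> 'm) \<Rightarrow> ('m \<Rightarrow> 'a \<Rightarrow> 'm) \<Rightarrow> ('a \<Rightarrow> 'n \<Rightarrow> 'n) \<Rightarrow> ('n \<Rightarrow> 'a \<Rightarrow> 'n)
    \<Rightarrow> ('m::ab_group_add \<Rightarrow> 'n::ab_group_add) \<Rightarrow> bool" where
  "bimod_map lM rM lN rN f \<longleftrightarrow>
     (\<forall>x y. f (x + y) = f x + f y) \<and> (\<forall>a x. f (lM a x) = lN a (f x)) \<and> (\<forall>a x. f (rM x a) = rN (f x) a)"

definition star_calculus :: "(complex \<Rightarrow> 'a::ring_1) \<Rightarrow> ('a \<Rightarrow> 'a) \<Rightarrow> ('a \<Rightarrow> 'w::ab_group_add \<Rightarrow> 'w)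
    \<Rightarrow> ('w \<Rightarrow> 'a \<Rightarrow> 'w) \<Rightarrow> ('a \<Rightarrow> 'w) \<Rightarrow> ('w \<Rightarrow> 'w) \<Rightarrow> bool" where
  "star_calculus emb st lw rw d stw \<longleftrightarrow>
     star_algebra emb st \<and> bimodule emb lw rw \<and>
     (\<forall>a b. d (a + b) = d a + d b) \<and> (\<forall>c a. d (emb c * a) = lw (emb c) (d a)) \<and>
     (\<forall>a b. d (a * b) = rw (d a) b + lw a (d b)) \<and>
     (\<forall>\<xi>. \<exists>(n::nat) f g. \<xi> = (\<Sum>i<n. lw (f i) (d (g i)))) \<and>
     (\<forall>\<xi> \<eta>. stw (\<xi> + \<eta>) = stw \<xi> + stw \<eta>) \<and>
     (\<forall>a \<xi>. stw (lw a \<xi>) = rw (stw \<xi>) (st a)) \<and> (\<forall>a \<xi>. stw (rw \<xi> a) = lw (st a) (stw \<xi>)) \<and>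
     (\<forall>\<xi>. stw (stw \<xi>) = \<xi>) \<and> (\<forall>a. stw (d a) = d (st a))"

definition zsmul :: "int \<Rightarrow> 'g::ab_group_add \<Rightarrow> 'g" where
  "zsmul k x = (\<Sum>_<nat k. x) - (\<Sum>_<nat (- k). x)"

inductive_set tensor_rel :: "('m::ab_group_add \<Rightarrow> 'a \<Rightarrow> 'm) \<Rightarrow> ('a \<Rightarrow> 'n::ab_group_add \<Rightarrow> 'n)
    \<Rightarrow> ('m \<times> 'n \<Rightarrow>\<^sub>0 int) set"
  for rM lN where
  zero: "0 \<in> tensor_rel rM lN"
| add: "f \<in> tensor_rel rM lN \<Longrightarrow> g \<in> tensor_rel rM lN \<Longrightarrow> f + g \<in> tensor_rel rM lN"
| neg: "f \<in> tensor_rel rM lN \<Longrightarrow> - f \<in> tensor_rel rM lN"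
| addl: "Poly_Mapping.single (m + m', n) 1 - Poly_Mapping.single (m, n) 1
          - Poly_Mapping.single (m', n) 1 \<in> tensor_rel rM lN"
| addr: "Poly_Mapping.single (m, n + n') 1 - Poly_Mapping.single (m, n) 1
          - Poly_Mapping.single (m, n') 1 \<in> tensor_rel rM lN"
| bal: "Poly_Mapping.single (rM m a, n) 1 - Poly_Mapping.single (m, lN a n) 1 \<in> tensor_rel rM lN"

definition free_eval :: "('m \<Rightarrow> 'n \<Rightarrow> 't::ab_group_add) \<Rightarrow> ('m \<times> 'n \<Rightarrow>\<^sub>0 int) \<Rightarrow> 't" where
  "free_eval tens f = (\<Sum>p\<in>Poly_Mapping.keys f. zsmul (Poly_Mapping.lookup f p) (tens (fst p) (snd p)))"

text \<open>(T, tens) is the tensor product M (x)_A N of bimodules, with its bimodule structure: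
  the induced map from the free abelian group on M x N is onto with kernel exactly the
  balanced-biadditive relations.\<close>
definition tensor_product :: "(complex \<Rightarrow> 'a::ring_1) \<Rightarrow> ('a \<Rightarrow> 'm::ab_group_add \<Rightarrow> 'm) \<Rightarrow> ('m \<Rightarrow> 'a \<Rightarrow> 'm)
    \<Rightarrow> ('a \<Rightarrow> 'n::ab_group_add \<Rightarrow> 'n) \<Rightarrow> ('n \<Rightarrow> 'a \<Rightarrow> 'n)
    \<Rightarrow> ('a \<Rightarrow> 't::ab_group_add \<Rightarrow> 't) \<Rightarrow> ('t \<Rightarrow> 'a \<Rightarrow> 't) \<Rightarrow> ('m \<Rightarrow> 'n \<Rightarrow> 't) \<Rightarrow> bool" where
  "tensor_product emb lM rM lN rN lT rT tens \<longleftrightarrow>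
     bimodule emb lT rT \<and>
     (\<forall>a m n. lT a (tens m n) = tens (lM a m) n) \<and>
     (\<forall>a m n. rT (tens m n) a = tens m (rN n a)) \<and>
     (\<forall>x. \<exists>f. free_eval tens f = x) \<and>
     (\<forall>f. free_eval tens f = 0 \<longleftrightarrow> f \<in> tensor_rel rM lN)"

end

theory Submission
  imports Defs
begin


lemma zsmul_0[simp]: "zsmul 0 x = 0" by (simp add: zsmul_def)

lemma zsmul_succ: "zsmul (k+1) x = zsmul k x + x"
proof (cases "k \<ge> 0")
  case True
  then have "nat (k+1) = Suc (nat k)" "nat (-(k+1)) = 0" "nat (-k) = 0" by auto
  then show ?thesis by (simp add: zsmul_def)
next
  case False
  then obtain m where m: "nat (-k) = Suc m" "nat (-(k+1)) = m" by (intro that[of "nat (-k-1)"]) auto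
  have "nat (k+1) = 0" "nat k = 0" using False by auto
  then show ?thesis using m by (simp add: zsmul_def)
qed

lemma zsmul_pred: "zsmul (k-1) x = zsmul k x - x"
  using zsmul_succ[of "k-1" x] by simp

lemma zsmul_1[simp]: "zsmul 1 x = x" using zsmul_succ[of 0 x] by simp

lemma zsmul_add_int: "zsmul (k+l) x = zsmul k x + zsmul l x"
proof (induct l rule: int_induct[where k=0])
  case base then show ?case by simp
next
  case (step1 i) then show ?case using zsmul_succ[of "k+i" x] zsmul_succ[of i x]
    by (simp add: add.assoc[symmetric])
next
  case (step2 i)
  have B: "zsmul (i-1) x = zsmul i x - x" by (rule zsmul_pred)
  have "zsmul (k+(i-1)) x = zsmul (k+i) x - x" using zsmul_pred[of "k+i" x] by (simp add: algebra_simps)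
  also have "\<dots> = zsmul k x + zsmul i x - x" using step2(2) by simp
  also have "\<dots> = zsmul k x + zsmul (i-1) x" by (subst B) (simp add: algebra_simps)
  finally show ?case .
qed

lemma zsmul_hom:
  assumes h: "\<forall>x y. h (x + y) = h x + h y"
  shows "h (zsmul k x) = zsmul k (h x)"
proof -
  have h0: "h 0 = 0" using h[rule_format, of 0 0] by simp
  have hd: "h (a - b) = h a - h b" for a b
    using h[rule_format, of "a - b" b] by (simp add: algebra_simps)
  show ?thesis
  proof (induct k rule: int_induct[where k=0])
    case base then show ?case by (simp add: h0)
  next
    case (step1 i) then show ?case by (simp add: zsmul_succ h)
  next
    case (step2 i) then show ?case by (simp add: zsmul_pred hd)
  qed
qed

lemma free_eval_superset:
  assumes "finite S" "Poly_Mapping.keys f \<subseteq> S"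
  shows "free_eval F f = (\<Sum>p\<in>S. zsmul (Poly_Mapping.lookup f p) (F (fst p) (snd p)))"
  unfolding free_eval_def
  by (rule sum.mono_neutral_left) (use assms in \<open>auto simp: not_in_keys_iff_lookup_eq_zero\<close>)

lemma free_eval_add: "free_eval F (f + g) = free_eval F f + free_eval F g"
proof -
  let ?S = "Poly_Mapping.keys f \<union> Poly_Mapping.keys g \<union> Poly_Mapping.keys (f+g)"
  have "free_eval F (f+g) = (\<Sum>p\<in>?S. zsmul (Poly_Mapping.lookup (f+g) p) (F (fst p) (snd p)))"
    by (rule free_eval_superset) auto
  also have "\<dots> = (\<Sum>p\<in>?S. zsmul (Poly_Mapping.lookup f p) (F (fst p) (snd p)))
     + (\<Sum>p\<in>?S. zsmul (Poly_Mapping.lookup g p) (F (fst p) (snd p)))"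
    by (simp add: lookup_add zsmul_add_int sum.distrib)
  also have "\<dots> = free_eval F f + free_eval F g"
    by (subst (1 2) free_eval_superset[where S = ?S]) auto
  finally show ?thesis .
qed

lemma free_eval_0[simp]: "free_eval F 0 = 0"
  using free_eval_add[of F 0 0] by simp

lemma free_eval_neg: "free_eval F (- f) = - free_eval F f"
  using free_eval_add[of F f "-f"] by (simp add: eq_neg_iff_add_eq_0 add.commute)

lemma free_eval_diff: "free_eval F (f - g) = free_eval F f - free_eval F g"
  using free_eval_add[of F f "-g"] free_eval_neg[of F g] by simp

lemma free_eval_single: "free_eval F (Poly_Mapping.single p 1) = F (fst p) (snd p)"
  by (simp add: free_eval_def)

lemma free_eval_sum: "free_eval F (\<Sum>k<(N::nat). g k) = (\<Sum>k<N. free_eval F (g k))"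
proof (induction N)
  case 0 then show ?case by simp
next
  case (Suc N) then show ?case by (simp add: free_eval_add)
qed

lemma free_eval_rel:
  assumes l: "\<forall>m m' n. F (m + m') n = F m n + F m' n"
    and r: "\<forall>m n n'. F m (n + n') = F m n + F m n'"
    and b: "\<forall>m a n. F (rM m a) n = F m (lN a n)"
    and f: "f \<in> tensor_rel rM lN"
  shows "free_eval F f = 0"
  using f
proof (induct rule: tensor_rel.induct)
  case zero then show ?case by simp
next
  case (add f g) then show ?case by (simp add: free_eval_add)
next
  case (neg f) then show ?case by (simp add: free_eval_neg)
next
  case (addl m m' n) then show ?case by (simp add: free_eval_diff free_eval_single l)
next
  case (addr m n n') then show ?case by (simp add: free_eval_diff free_eval_single r)
next
  case (bal m a n) then show ?case by (simp add: free_eval_diff free_eval_single b)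
qed

lemma sum_to_lessThan:
  assumes "finite K"
  shows "\<exists>(N::nat) h. (\<Sum>p\<in>K. g p) = (\<Sum>k<N. g (h k))"
proof -
  obtain h where "bij_betw h {0..<card K} K" using ex_bij_betw_nat_finite[OF assms] by blast
  then have "(\<Sum>k\<in>{0..<card K}. g (h k)) = (\<Sum>p\<in>K. g p)" by (rule sum.reindex_bij_betw)
  then have E: "(\<Sum>p\<in>K. g p) = (\<Sum>k<card K. g (h k))" by (simp add: atLeast0LessThan)
  show ?thesis
  proof (rule exI[where x="card K"], rule exI[where x=h])
    show "(\<Sum>p\<in>K. g p) = (\<Sum>k<card K. g (h k))" by (rule E)
  qed
qed

context
  fixes emb :: "complex \<Rightarrow> 'a::ring_1"
    and lM :: "'a \<Rightarrow> 'm::ab_group_add \<Rightarrow> 'm" and rM and lN :: "'a \<Rightarrow> 'n::ab_group_add \<Rightarrow> 'n" and rN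
    and lT :: "'a \<Rightarrow> 't::ab_group_add \<Rightarrow> 't" and rT and tens
  assumes TP: "tensor_product emb lM rM lN rN lT rT tens"
begin

lemma tens_rel0: "f \<in> tensor_rel rM lN \<Longrightarrow> free_eval tens f = 0"
  using TP unfolding tensor_product_def by blast

lemma tens_addl: "tens (m + m') n = tens m n + tens m' n"
  using tens_rel0[OF tensor_rel.addl[where m=m and m'=m' and n=n]]
  unfolding free_eval_diff free_eval_single by (simp add: algebra_simps)

lemma tens_addr: "tens m (n + n') = tens m n + tens m n'"
  using tens_rel0[OF tensor_rel.addr[where m=m and n=n and n'=n']]
  unfolding free_eval_diff free_eval_single by (simp add: algebra_simps)

lemma tens_bal: "tens (rM m a) n = tens m (lN a n)"
  using tens_rel0[OF tensor_rel.bal[where m=m and a=a and n=n]]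
  unfolding free_eval_diff free_eval_single by (simp add: algebra_simps)

lemma tens_span: "\<exists>N a b. x = (\<Sum>k<(N::nat). tens (a k) (b k))"
proof -
  obtain f where f: "free_eval tens f = x" using TP unfolding tensor_product_def by blast
  have z: "zsmul k (tens m n) = tens (zsmul k m) n" for k m n
    using zsmul_hom[of "\<lambda>m. tens m n" k m] tens_addl by simp
  have "x = (\<Sum>p\<in>Poly_Mapping.keys f. tens (zsmul (Poly_Mapping.lookup f p) (fst p)) (snd p))"
    using f unfolding free_eval_def by (simp add: z)
  then obtain N h where X: "x = (\<Sum>k<(N::nat). (\<lambda>p. tens (zsmul (Poly_Mapping.lookup f p) (fst p)) (snd p)) (h k))"
    using sum_to_lessThan[of "Poly_Mapping.keys f"] by fastforce
  show ?thesis
  proof (rule exI[where x=N], rule exI[where x="\<lambda>k. zsmul (Poly_Mapping.lookup f (h k)) (fst (h k))"], rule exI[where x="\<lambda>k. snd (h k)"])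
    show "x = (\<Sum>k<N. tens ((\<lambda>k. zsmul (Poly_Mapping.lookup f (h k)) (fst (h k))) k) ((\<lambda>k. snd (h k)) k))"
      using X by simp
  qed
qed

lemma tens_transport:
  fixes F :: "'m \<Rightarrow> 'n \<Rightarrow> 'x::ab_group_add"
  assumes l: "\<forall>m m' n. F (m + m') n = F m n + F m' n"
    and r: "\<forall>m n n'. F m (n + n') = F m n + F m n'"
    and b: "\<forall>m a n. F (rM m a) n = F m (lN a n)"
    and eq: "(\<Sum>k<(N::nat). tens (a k) (b k)) = (\<Sum>i<(M::nat). tens (c i) (e i))"
  shows "(\<Sum>k<N. F (a k) (b k)) = (\<Sum>i<M. F (c i) (e i))"
proof -
  define f where "f = (\<Sum>k<N. Poly_Mapping.single (a k, b k) (1::int)) - (\<Sum>i<M. Poly_Mapping.single (c i, e i) 1)"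
  have "free_eval tens f = 0" using eq
    by (simp add: f_def free_eval_diff free_eval_sum free_eval_single)
  then have "f \<in> tensor_rel rM lN" using TP unfolding tensor_product_def by blast
  then have "free_eval F f = 0" by (rule free_eval_rel[OF l r b])
  then show ?thesis by (simp add: f_def free_eval_diff free_eval_sum free_eval_single)
qed

end

lemma hom_sum:
  fixes h :: "'x::ab_group_add \<Rightarrow> 'y::ab_group_add"
  assumes h: "\<forall>x y. h (x + y) = h x + h y"
  shows "h (\<Sum>k<(n::nat). g k) = (\<Sum>k<n. h (g k))"
proof -
  have h0: "h 0 = 0" using h[rule_format, of 0 0] by simp
  show ?thesis by (induction n) (simp_all add: h0 h)
qed

theorem mainTheorem4:
  fixes emb :: "complex \<Rightarrow> 'a::ring_1" and st :: "'a \<Rightarrow> 'a"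
    and lw :: "'a \<Rightarrow> 'w::ab_group_add \<Rightarrow> 'w" and rw :: "'w \<Rightarrow> 'a \<Rightarrow> 'w"
    and d :: "'a \<Rightarrow> 'w" and stw :: "'w \<Rightarrow> 'w"
    and ls :: "'a \<Rightarrow> 's::ab_group_add \<Rightarrow> 's" and rs :: "'s \<Rightarrow> 'a \<Rightarrow> 's"
    and lt :: "'a \<Rightarrow> 't::ab_group_add \<Rightarrow> 't" and rt :: "'t \<Rightarrow> 'a \<Rightarrow> 't" and tWS :: "'w \<Rightarrow> 's \<Rightarrow> 't"
    and lu :: "'a \<Rightarrow> 'u::ab_group_add \<Rightarrow> 'u" and ru :: "'u \<Rightarrow> 'a \<Rightarrow> 'u" and tSW :: "'s \<Rightarrow> 'w \<Rightarrow> 'u"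
    and lv :: "'a \<Rightarrow> 'v::ab_group_add \<Rightarrow> 'v" and rv :: "'v \<Rightarrow> 'a \<Rightarrow> 'v" and tWSb :: "'w \<Rightarrow> 's \<Rightarrow> 'v"
    and J :: "'s \<Rightarrow> 's" and \<epsilon> \<epsilon>' :: complex
    and nabla :: "'s \<Rightarrow> 't" and \<sigma> :: "'u \<Rightarrow> 't" and tri :: "'t \<Rightarrow> 's"
  assumes calc: "star_calculus emb st lw rw d stw"
    and bimodS: "bimodule emb ls rs"
    and tensWS: "tensor_product emb lw rw ls rs lt rt tWS"
    and tensSW: "tensor_product emb ls rs lw rw lu ru tSW"
    and tensWSbar: "tensor_product emb lw rw (\<lambda>a \<phi>. rs \<phi> (st a)) (\<lambda>\<phi> a. ls (st a) \<phi>) lv rv tWSb"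
    and eps: "\<epsilon> \<in> {1, -1}" and eps': "\<epsilon>' \<in> {1, -1}"
    and J_add: "\<forall>\<phi> \<psi>. J (\<phi> + \<psi>) = J \<phi> + J \<psi>"
    and J_antilin: "\<forall>c \<phi>. J (ls (emb c) \<phi>) = ls (emb (cnj c)) (J \<phi>)"
    and J_left: "\<forall>a \<phi>. J (ls a \<phi>) = rs (J \<phi>) (st a)"
    and J_right: "\<forall>a \<phi>. J (rs \<phi> a) = ls (st a) (J \<phi>)"
    and J_sq: "\<forall>\<phi>. J (J \<phi>) = ls (emb \<epsilon>) \<phi>"
    and nabla_add: "\<forall>\<phi> \<psi>. nabla (\<phi> + \<psi>) = nabla \<phi> + nabla \<psi>"
    and nabla_lin: "\<forall>c \<phi>. nabla (ls (emb c) \<phi>) = lt (emb c) (nabla \<phi>)"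
    and nabla_leibniz: "\<forall>a \<phi>. nabla (ls a \<phi>) = tWS (d a) \<phi> + lt a (nabla \<phi>)"
    and sigma_bimod: "bimod_map lu ru lt rt \<sigma>"
    and sigma_def: "\<forall>\<phi> a. \<sigma> (tSW \<phi> (d a)) = nabla (rs \<phi> a) - rt (nabla \<phi>) a"
    and sigma_inv: "bij \<sigma>"
    and nabla_J: "\<forall>\<phi> n \<xi> \<chi> m \<psi> \<eta>.
        nabla \<phi> = (\<Sum>k<(n::nat). tWS (\<xi> k) (\<chi> k)) \<longrightarrow>
        inv \<sigma> (nabla (J \<phi>)) = (\<Sum>i<(m::nat). tSW (\<psi> i) (\<eta> i)) \<longrightarrow>
        (\<Sum>k<(n::nat). tWSb (\<xi> k) (J (\<chi> k))) = (\<Sum>i<(m::nat). tWSb (stw (\<eta> i)) (\<psi> i))"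
    and tri_bimod: "bimod_map lt rt ls rs tri"
    and tri_J: "\<forall>\<xi> \<phi>. J (tri (tWS \<xi> \<phi>)) = ls (emb \<epsilon>') (tri (\<sigma> (tSW (J \<phi>) (stw \<xi>))))"
  shows "(\<forall>\<phi>. J (J \<phi>) = ls (emb \<epsilon>) \<phi>) \<and>
    (\<forall>a b \<phi>. ls a (J (ls b (inv J \<phi>))) = J (ls b (inv J (ls a \<phi>)))) \<and>
    (\<forall>\<phi>. J (tri (nabla \<phi>)) = ls (emb \<epsilon>') (tri (nabla (J \<phi>)))) \<and>
    (\<forall>a b \<phi>. let D = (\<lambda>\<psi>. tri (nabla \<psi>));
                 C = (\<lambda>\<psi>. D (ls a \<psi>) - ls a (D \<psi>));
                 B = (\<lambda>\<psi>. J (ls b (inv J \<psi>)))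
             in C (B \<phi>) - B (C \<phi>) = 0) \<and>
    (\<forall>\<gamma> \<epsilon>''. bimod_map ls rs ls rs \<gamma> \<and> (\<forall>\<phi>. \<gamma> (\<gamma> \<phi>) = \<phi>) \<and>
        (\<forall>\<phi> n \<xi> \<chi>. nabla \<phi> = (\<Sum>k<(n::nat). tWS (\<xi> k) (\<chi> k)) \<longrightarrow>
            nabla (\<gamma> \<phi>) = (\<Sum>k<(n::nat). tWS (\<xi> k) (\<gamma> (\<chi> k)))) \<and>
        (\<forall>n \<xi> \<chi>. \<gamma> (tri (\<Sum>k<(n::nat). tWS (\<xi> k) (\<chi> k))) = - tri (\<Sum>k<(n::nat). tWS (\<xi> k) (\<gamma> (\<chi> k)))) \<and>
        \<epsilon>'' \<in> {1, -1} \<and> (\<forall>\<phi>. J (\<gamma> \<phi>) = ls (emb \<epsilon>'') (\<gamma> (J \<phi>)))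
      \<longrightarrow> (\<forall>a \<phi>. \<gamma> (ls a \<phi>) = ls a (\<gamma> \<phi>)) \<and>
          (\<forall>\<phi>. J (\<gamma> \<phi>) = ls (emb \<epsilon>'') (\<gamma> (J \<phi>))) \<and>
          (\<forall>\<phi>. tri (nabla (\<gamma> \<phi>)) = - \<gamma> (tri (nabla \<phi>))))"
proof -
  have SA: "star_algebra emb st" using calc unfolding star_calculus_def by (elim conjE) assumption
  have calcU: "\<forall>a \<xi>. stw (rw \<xi> a) = lw (st a) (stw \<xi>)" using calc unfolding star_calculus_def by (elim conjE) assumption
  have stw_stw: "\<forall>\<xi>. stw (stw \<xi>) = \<xi>" using calc unfolding star_calculus_def by (elim conjE) assumption
  have emb_mult: "\<forall>c e. emb (c * e) = emb c * emb e" using SA unfolding star_algebra_def by (elim conjE) assumption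
  have emb1: "emb 1 = 1" using SA unfolding star_algebra_def by (elim conjE) assumption
  have st_st: "\<forall>x. st (st x) = x" using SA unfolding star_algebra_def by (elim conjE) assumption
  have ls_add: "\<forall>a m n. ls a (m + n) = ls a m + ls a n" using bimodS unfolding bimodule_def by (elim conjE) assumption
  have ls_mult: "\<forall>a b m. ls (a * b) m = ls a (ls b m)" using bimodS unfolding bimodule_def by (elim conjE) assumption
  have ls1: "\<forall>m. ls 1 m = m" using bimodS unfolding bimodule_def by (elim conjE) assumption
  have lsrs: "\<forall>a b m. ls a (rs m b) = rs (ls a m) b" using bimodS unfolding bimodule_def by (elim conjE) assumption
  have sig_add: "\<forall>x y. \<sigma> (x + y) = \<sigma> x + \<sigma> y" using sigma_bimod unfolding bimod_map_def by (elim conjE) assumption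
  have tri_add: "\<forall>x y. tri (x + y) = tri x + tri y" using tri_bimod unfolding bimod_map_def by (elim conjE) assumption
  have tri_l: "\<forall>a x. tri (lt a x) = ls a (tri x)" using tri_bimod unfolding bimod_map_def by (elim conjE) assumption
  have tri_r: "\<forall>a x. tri (rt x a) = rs (tri x) a" using tri_bimod unfolding bimod_map_def by (elim conjE) assumption
  have rt_tWS: "\<forall>a m n. rt (tWS m n) a = tWS m (rs n a)" using tensWS unfolding tensor_product_def by (elim conjE) assumption
  have ee: "ls (emb \<epsilon>) (ls (emb \<epsilon>) \<phi>) = \<phi>" for \<phi>
  proof -
    have "\<epsilon> * \<epsilon> = 1" using eps by auto
    then show ?thesis by (simp add: ls_mult[rule_format, symmetric] emb_mult[rule_format, symmetric] emb1 ls1)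
  qed
  have Jinj: "inj J"
  proof (rule injI)
    fix x y assume "J x = J y"
    then have "J (J x) = J (J y)" by simp
    then have "ls (emb \<epsilon>) x = ls (emb \<epsilon>) y" by (simp add: J_sq)
    then have "ls (emb \<epsilon>) (ls (emb \<epsilon>) x) = ls (emb \<epsilon>) (ls (emb \<epsilon>) y)" by simp
    then show "x = y" by (simp add: ee)
  qed
  have Jsurj: "surj J"
  proof -
    show ?thesis by (rule surjI[of J "\<lambda>\<phi>. J (ls (emb \<epsilon>) \<phi>)"]) (simp add: J_sq ee)
  qed
  have JinvJ: "J (inv J \<phi>) = \<phi>" for \<phi> using Jsurj by (simp add: surj_f_inv_f)
  have invJJ: "inv J (J x) = x" for x using Jinj by simp
  have B_eq: "J (ls b (inv J \<psi>)) = rs \<psi> (st b)" for b \<psi>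
    by (simp add: J_left JinvJ)
  have P2: "\<forall>a b \<phi>. ls a (J (ls b (inv J \<phi>))) = J (ls b (inv J (ls a \<phi>)))"
  proof (intro allI)
    fix a b \<phi>
    have "J (rs (inv J \<phi>) (st a)) = ls a \<phi>" by (simp add: J_right st_st JinvJ)
    then have i: "inv J (ls a \<phi>) = rs (inv J \<phi>) (st a)" using invJJ by (metis)
    have "ls a (J (ls b (inv J \<phi>))) = J (rs (ls b (inv J \<phi>)) (st a))" by (simp add: J_right st_st)
    also have "\<dots> = J (ls b (inv J (ls a \<phi>)))" by (simp add: i lsrs)
    finally show "ls a (J (ls b (inv J \<phi>))) = J (ls b (inv J (ls a \<phi>)))" .
  qed
  have Jtri_add: "\<forall>x y. J (tri (x + y)) = J (tri x) + J (tri y)" using J_add tri_add by simp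
  have lse_add: "\<forall>x y. ls (emb \<epsilon>') (x + y) = ls (emb \<epsilon>') x + ls (emb \<epsilon>') y" using ls_add by simp
  have tritsig_add: "\<forall>x y. tri (\<sigma> (x + y)) = tri (\<sigma> x) + tri (\<sigma> y)" using sig_add tri_add by simp
  have P3: "\<forall>\<phi>. J (tri (nabla \<phi>)) = ls (emb \<epsilon>') (tri (nabla (J \<phi>)))"
  proof
    fix \<phi>
    obtain n \<xi> \<chi> where N: "nabla \<phi> = (\<Sum>k<(n::nat). tWS (\<xi> k) (\<chi> k))"
      using tens_span[OF tensWS] by blast
    obtain m \<psi> \<eta> where M: "inv \<sigma> (nabla (J \<phi>)) = (\<Sum>i<(m::nat). tSW (\<psi> i) (\<eta> i))"
      using tens_span[OF tensSW] by blast
    have E: "(\<Sum>k<n. tWSb (\<xi> k) (J (\<chi> k))) = (\<Sum>i<m. tWSb (stw (\<eta> i)) (\<psi> i))"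
      by (rule nabla_J[rule_format, OF N M])
    have stw_add: "\<forall>x y. stw (x + y) = stw x + stw y" using calc unfolding star_calculus_def by (elim conjE) assumption
    have T: "(\<Sum>k<n. tSW (J (\<chi> k)) (stw (\<xi> k))) = (\<Sum>i<m. tSW (\<psi> i) (stw (stw (\<eta> i))))"
    proof (rule tens_transport[OF tensWSbar, where F = "\<lambda>\<xi> s. tSW s (stw \<xi>)", OF _ _ _ E])
      show "\<forall>m m' n. tSW n (stw (m + m')) = tSW n (stw m) + tSW n (stw m')"
        using stw_add tens_addr[OF tensSW] by simp
      show "\<forall>m n n'. tSW (n + n') (stw m) = tSW n (stw m) + tSW n' (stw m)"
        using tens_addl[OF tensSW] by simp
      show "\<forall>m a n. tSW n (stw (rw m a)) = tSW (rs n (st a)) (stw m)"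
        using calcU tens_bal[OF tensSW] by simp
    qed
    then have T': "(\<Sum>k<n. tSW (J (\<chi> k)) (stw (\<xi> k))) = inv \<sigma> (nabla (J \<phi>))"
      using M stw_stw by simp
    have "J (tri (nabla \<phi>)) = (\<Sum>k<n. J (tri (tWS (\<xi> k) (\<chi> k))))"
      unfolding N by (rule hom_sum[OF Jtri_add])
    also have "\<dots> = (\<Sum>k<n. ls (emb \<epsilon>') (tri (\<sigma> (tSW (J (\<chi> k)) (stw (\<xi> k))))))"
      using tri_J by simp
    also have "\<dots> = ls (emb \<epsilon>') (\<Sum>k<n. tri (\<sigma> (tSW (J (\<chi> k)) (stw (\<xi> k)))))"
      by (rule hom_sum[OF lse_add, symmetric])
    also have "\<dots> = ls (emb \<epsilon>') (tri (\<sigma> (\<Sum>k<n. tSW (J (\<chi> k)) (stw (\<xi> k)))))"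
      by (subst hom_sum[OF tritsig_add]) (rule refl)
    also have "\<dots> = ls (emb \<epsilon>') (tri (nabla (J \<phi>)))"
      unfolding T' using sigma_inv by (simp add: bij_is_surj surj_f_inv_f)
    finally show "J (tri (nabla \<phi>)) = ls (emb \<epsilon>') (tri (nabla (J \<phi>)))" .
  qed
  have Ceq: "tri (nabla (ls a \<psi>)) - ls a (tri (nabla \<psi>)) = tri (tWS (d a) \<psi>)" for a \<psi>
    using nabla_leibniz tri_add tri_l by simp
  have P4: "\<forall>a b \<phi>. let D = (\<lambda>\<psi>. tri (nabla \<psi>));
                 C = (\<lambda>\<psi>. D (ls a \<psi>) - ls a (D \<psi>));
                 B = (\<lambda>\<psi>. J (ls b (inv J \<psi>)))
             in C (B \<phi>) - B (C \<phi>) = 0"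
    unfolding Let_def B_eq Ceq by (simp add: rt_tWS[rule_format, symmetric] tri_r)
  have P5: "\<forall>\<gamma> \<epsilon>''. bimod_map ls rs ls rs \<gamma> \<and> (\<forall>\<phi>. \<gamma> (\<gamma> \<phi>) = \<phi>) \<and>
        (\<forall>\<phi> n \<xi> \<chi>. nabla \<phi> = (\<Sum>k<(n::nat). tWS (\<xi> k) (\<chi> k)) \<longrightarrow>
            nabla (\<gamma> \<phi>) = (\<Sum>k<(n::nat). tWS (\<xi> k) (\<gamma> (\<chi> k)))) \<and>
        (\<forall>n \<xi> \<chi>. \<gamma> (tri (\<Sum>k<(n::nat). tWS (\<xi> k) (\<chi> k))) = - tri (\<Sum>k<(n::nat). tWS (\<xi> k) (\<gamma> (\<chi> k)))) \<and>
        \<epsilon>'' \<in> {1, -1} \<and> (\<forall>\<phi>. J (\<gamma> \<phi>) = ls (emb \<epsilon>'') (\<gamma> (J \<phi>)))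
      \<longrightarrow> (\<forall>a \<phi>. \<gamma> (ls a \<phi>) = ls a (\<gamma> \<phi>)) \<and>
          (\<forall>\<phi>. J (\<gamma> \<phi>) = ls (emb \<epsilon>'') (\<gamma> (J \<phi>))) \<and>
          (\<forall>\<phi>. tri (nabla (\<gamma> \<phi>)) = - \<gamma> (tri (nabla \<phi>)))"
  proof (intro allI impI)
    fix \<gamma> :: "'s \<Rightarrow> 's" and \<epsilon>'' :: complex
    assume H: "bimod_map ls rs ls rs \<gamma> \<and> (\<forall>\<phi>. \<gamma> (\<gamma> \<phi>) = \<phi>) \<and>
        (\<forall>\<phi> n \<xi> \<chi>. nabla \<phi> = (\<Sum>k<(n::nat). tWS (\<xi> k) (\<chi> k)) \<longrightarrow>
            nabla (\<gamma> \<phi>) = (\<Sum>k<(n::nat). tWS (\<xi> k) (\<gamma> (\<chi> k)))) \<and>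
        (\<forall>n \<xi> \<chi>. \<gamma> (tri (\<Sum>k<(n::nat). tWS (\<xi> k) (\<chi> k))) = - tri (\<Sum>k<(n::nat). tWS (\<xi> k) (\<gamma> (\<chi> k)))) \<and>
        \<epsilon>'' \<in> {1, -1} \<and> (\<forall>\<phi>. J (\<gamma> \<phi>) = ls (emb \<epsilon>'') (\<gamma> (J \<phi>)))"
    have H1: "bimod_map ls rs ls rs \<gamma>" using H by (rule conjunct1)
    have H3: "\<forall>\<phi> n \<xi> \<chi>. nabla \<phi> = (\<Sum>k<(n::nat). tWS (\<xi> k) (\<chi> k)) \<longrightarrow>
            nabla (\<gamma> \<phi>) = (\<Sum>k<(n::nat). tWS (\<xi> k) (\<gamma> (\<chi> k)))"
      using H by (rule conjunct1[OF conjunct2[OF conjunct2]])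
    have H4: "\<forall>n \<xi> \<chi>. \<gamma> (tri (\<Sum>k<(n::nat). tWS (\<xi> k) (\<chi> k))) = - tri (\<Sum>k<(n::nat). tWS (\<xi> k) (\<gamma> (\<chi> k)))"
      using H by (rule conjunct1[OF conjunct2[OF conjunct2[OF conjunct2]]])
    have H6: "\<forall>\<phi>. J (\<gamma> \<phi>) = ls (emb \<epsilon>'') (\<gamma> (J \<phi>))"
      using H by (rule conjunct2[OF conjunct2[OF conjunct2[OF conjunct2[OF conjunct2]]]])
    have g1: "\<forall>a \<phi>. \<gamma> (ls a \<phi>) = ls a (\<gamma> \<phi>)" using H1 unfolding bimod_map_def by (elim conjE) assumption
    have g3: "\<forall>\<phi>. tri (nabla (\<gamma> \<phi>)) = - \<gamma> (tri (nabla \<phi>))"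
    proof
      fix \<phi>
      obtain n \<xi> \<chi> where N: "nabla \<phi> = (\<Sum>k<(n::nat). tWS (\<xi> k) (\<chi> k))"
        using tens_span[OF tensWS] by blast
      then have "nabla (\<gamma> \<phi>) = (\<Sum>k<n. tWS (\<xi> k) (\<gamma> (\<chi> k)))" by (rule H3[rule_format])
      moreover have "\<gamma> (tri (\<Sum>k<n. tWS (\<xi> k) (\<chi> k))) = - tri (\<Sum>k<n. tWS (\<xi> k) (\<gamma> (\<chi> k)))"
        by (rule H4[rule_format])
      ultimately show "tri (nabla (\<gamma> \<phi>)) = - \<gamma> (tri (nabla \<phi>))" using N by simp
    qed
    show "(\<forall>a \<phi>. \<gamma> (ls a \<phi>) = ls a (\<gamma> \<phi>)) \<and>
          (\<forall>\<phi>. J (\<gamma> \<phi>) = ls (emb \<epsilon>'') (\<gamma> (J \<phi>))) \<and>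
          (\<forall>\<phi>. tri (nabla (\<gamma> \<phi>)) = - \<gamma> (tri (nabla \<phi>)))"
      by (rule conjI[OF g1 conjI[OF H6 g3]])
  qed
  show ?thesis by (rule conjI[OF J_sq conjI[OF P2 conjI[OF P3 conjI[OF P4 P5]]]])
qed

end
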